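(* Let $n\ge3$ be an integer such that $n+1$ is a perfect square, and let $q\le n$ be a prime with $q>\frac{2n}{3}$ and $q\equiv3\pmod 4$. Then $R_{(n,n)}(x)$ has no factor in $\mathbb{Z}[x]$ whose degree lies in the interval $[q,n]$.
   Context: $\mathrm{He}_k(x)$ denotes the monic probabilists' Hermite polynomial of degree $k$. For a partition $\lambda=(\lambda_1\ge\dots\ge\lambda_r\ge0)$ the degree sequence is $n_\lambda=(\lambda_r,\lambda_{r-1}+1,\dots,\lambda_1+r-1)$ and $\mathrm{He}_\lambda=\mathrm{Wr}[\mathrm{He}_{n_1},\dots,\mathrm{He}_{n_r}]/\prod_{i<j}(n_j-n_i)$. The $2$-core of $\lambda$ is obtained by successively replacing entries $a$ of $n_\lambda$ by $a-2\ge 0$ not already in $n_\lambda$ until impossible; $\mathrm{He}_\lambda(x)=x^{|\bar\lambda|}R_\lambda(x)$ with $R_\lambda(0)\ne0$. For $\lambda=(n,n)$ the $2$-core is empty, so $R_{(n,n)}=\mathrm{He}_{(n,n)}=\mathrm{Wr}[\mathrm{He}_n,\mathrm{He}_{n+1}]$, a monic integer polynomial of degree $2n$. *)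

theory Defs
  imports "HOL-Computational_Algebra.Polynomial" "HOL-Computational_Algebra.Primes"
begin

text \<open>Monic probabilists' Hermite polynomials, via the standard three-term recurrence
  He_0 = 1, He_1 = x, He_(k+2) = x He_(k+1) - (k+1) He_k.\<close>
fun hermite_He :: "nat \<Rightarrow> int poly" where
  "hermite_He 0 = 1"
| "hermite_He (Suc 0) = [:0, 1:]"
| "hermite_He (Suc (Suc k)) = [:0, 1:] * hermite_He (Suc k) - smult (int (Suc k)) (hermite_He k)"

definition wronskian2 :: "int poly \<Rightarrow> int poly \<Rightarrow> int poly" where
  "wronskian2 f g = f * pderiv g - pderiv f * g"

text \<open>He_(n,n) = Wr[He_n, He_(n+1)] / ((n+1) - n); its 2-core is empty so R_(n,n) = He_(n,n).\<close>
definition R_nn :: "nat \<Rightarrow> int poly" where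
  "R_nn n = wronskian2 (hermite_He n) (hermite_He (Suc n))"

end

theory Submission
  imports Defs "HOL-Number_Theory.Cong"
begin


abbreviation He where "He \<equiv> hermite_He"

lemma He_parity: "odd (k + i) \<Longrightarrow> coeff (He k) i = 0"
proof (induction k arbitrary: i rule: hermite_He.induct)
  case 1 then show ?case by (cases i) auto
next
  case 2 then show ?case by (cases i) (auto simp: coeff_pCons odd_pos split: nat.splits)
next
  case (3 k)
  show ?case
  proof (cases i)
    case 0 then show ?thesis using 3 by simp
  next
    case (Suc j)
    have "coeff (He (Suc k)) j = 0" using 3 Suc by auto
    moreover have "coeff (He k) i = 0" using 3 by auto
    ultimately show ?thesis using Suc by simp
  qed
qed

lemma He_top: "coeff (He k) k = 1 \<and> (\<forall>i>k. coeff (He k) i = 0)"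
proof (induction k rule: hermite_He.induct)
  case 1 then show ?case by (auto simp: coeff_pCons split: nat.splits)
next
  case 2 then show ?case by (auto simp: coeff_pCons split: nat.splits)
next
  case (3 k)
  have a: "coeff (He (Suc (Suc k))) i = coeff (He (Suc k)) (i - 1) - int (Suc k) * coeff (He k) i" if "i > 0" for i
    using that by (cases i) auto
  show ?case
  proof (intro conjI allI impI)
    show "coeff (He (Suc (Suc k))) (Suc (Suc k)) = 1" using a[of "Suc (Suc k)"] 3 by simp
  next
    fix i assume "i > Suc (Suc k)"
    then show "coeff (He (Suc (Suc k))) i = 0" using a[of i] 3 by simp
  qed
qed

lemma He_degree: "degree (He k) \<le> k"
  using He_top by (meson degree_le)

lemma alg1:
  fixes A B C X :: "'a::comm_ring_1" and k :: nat
  assumes "A = X*B - of_nat k*C"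
  shows "A + X*(of_nat (Suc k)*B) - of_nat (Suc k)*(of_nat k*C) = of_nat (Suc (Suc k))*A"
  unfolding assms by (simp add: algebra_simps)

lemma alg2:
  fixes A2 A1 A0 C X :: "'a::comm_ring_1" and k :: nat
  assumes "A2 = X*A1 - of_nat (Suc k)*A0" "A1 = X*A0 - of_nat k*C"
  shows "of_nat (Suc (Suc k)) * (A1 * A1) - of_nat (Suc k) * (A0 * A2) =
    of_nat (Suc k) * (of_nat (Suc k) * (A0 * A0) - of_nat k * (C * A1)) + A1 * A1"
  unfolding assms(1) unfolding assms(2) by (simp add: algebra_simps)

lemma He_pderiv_aux: "pderiv (He k) = smult (int k) (He (k - 1))"
proof (induction k rule: hermite_He.induct)
  case 1 then show ?case by simp
next
  case 2 then show ?case by (simp add: pderiv_pCons)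
next
  case (3 k)
  have x: "pderiv [:0, 1:] = (1::int poly)" by (simp add: pderiv_pCons)
  have e1: "pderiv (He (Suc (Suc k))) = He (Suc k) + [:0,1:] * pderiv (He (Suc k)) - smult (int (Suc k)) (pderiv (He k))"
    by (simp only: hermite_He.simps pderiv_diff pderiv_mult pderiv_smult x mult_1_left)
  show ?case
  proof (cases k)
    case 0
    then show ?thesis using e1 3 by simp
  next
    case (Suc j)
    have rec: "He (Suc k) = [:0, 1:] * He k - of_nat k * (He j)" using Suc
      by (simp only: hermite_He.simps of_nat_mult_conv_smult)
    have "pderiv (He (Suc (Suc k))) = He (Suc k) + [:0,1:] * smult (of_nat (Suc k)) (He k) - smult (of_nat (Suc k)) (smult (of_nat k) (He j))"
      using e1 3 Suc by (simp only: diff_Suc_1)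
    also have "\<dots> = He (Suc k) + [:0,1:] * (of_nat (Suc k) * He k) - of_nat (Suc k) * (of_nat k * He j)"
      by (simp only: of_nat_mult_conv_smult)
    also have "\<dots> = of_nat (Suc (Suc k)) * (He (Suc k))"
      using alg1[OF rec] .
    finally show ?thesis by (simp only: of_nat_mult_conv_smult diff_Suc_1)
  qed
qed

lemma He_pderiv: "pderiv (He (Suc k)) = smult (int (Suc k)) (He k)"
  using He_pderiv_aux[of "Suc k"] by simp

lemma R_alt: "R_nn k = of_nat (Suc k) * (He k * He k) - of_nat k * (He (k - 1) * He (Suc k))"
  unfolding R_nn_def wronskian2_def He_pderiv He_pderiv_aux[of k] of_nat_mult_conv_smult[symmetric]
  by (simp add: algebra_simps)

lemma R_0: "R_nn 0 = 1"
  by (simp add: R_nn_def wronskian2_def pderiv_pCons)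

lemma R_rec: "R_nn (Suc k) = of_nat (Suc k) * (R_nn k) + He (Suc k) * He (Suc k)"
proof (cases k)
  case 0
  have h2: "He (Suc (Suc 0)) = He (Suc 0) * He (Suc 0) - 1" by (simp add: one_pCons)
  have "R_nn 1 = of_nat 2 * (He 1 * He 1) - of_nat 1 * (He 0 * He (Suc 1))"
    using R_alt[of 1] by simp
  also have "\<dots> = of_nat 1 * R_nn 0 + He 1 * He 1" using h2 by (simp add: R_0)
  finally show ?thesis using 0 by simp
next
  case (Suc j)
  have r1: "He (Suc (Suc k)) = [:0, 1:] * He (Suc k) - of_nat (Suc k) * (He k)" 
    by (simp only: hermite_He.simps of_nat_mult_conv_smult)
  have r2: "He (Suc k) = [:0, 1:] * He k - of_nat k * (He j)" using Suc
    by (simp only: hermite_He.simps of_nat_mult_conv_smult)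
  have "R_nn (Suc k) = of_nat (Suc (Suc k)) * (He (Suc k) * He (Suc k)) - of_nat (Suc k) * (He k * He (Suc (Suc k)))"
    by (simp only: R_alt[of "Suc k"] diff_Suc_1)
  also have "\<dots> = of_nat (Suc k) * (of_nat (Suc k) * (He k * He k) - of_nat k * (He j * He (Suc k))) + He (Suc k) * He (Suc k)"
    using alg2[OF r1 r2] .
  also have "\<dots> = of_nat (Suc k) * (R_nn k) + He (Suc k) * He (Suc k)"
  proof -
    have "He (k - 1) = He j" using Suc by simp
    then show ?thesis by (simp only: R_alt[of k])
  qed
  finally show ?thesis .
qed


definition low :: "int \<Rightarrow> nat \<Rightarrow> int poly \<Rightarrow> bool" where
  "low m N f \<longleftrightarrow> (\<forall>k<N. m dvd coeff f k)"

lemma low_add: "low m N f \<Longrightarrow> low m N g \<Longrightarrow> low m N (f + g)"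
  unfolding low_def by auto

lemma low_mult_left: "low m N f \<Longrightarrow> low m N (g * f)"
  unfolding low_def coeff_mult
  by (auto intro!: dvd_sum dvd_mult)

lemma low_of_dvd: "[:m:] dvd f \<Longrightarrow> low m N f"
  unfolding low_def by (simp add: const_poly_dvd_iff)

lemma low_cong: "[:m:] dvd (f - g) \<Longrightarrow> low m N g \<Longrightarrow> low m N f"
proof -
  assume a: "[:m:] dvd (f - g)" "low m N g"
  have "f = (f - g) + g" by simp
  then show ?thesis using low_add[OF low_of_dvd[OF a(1)] a(2)] by metis
qed

lemma low_M: "low m N (monom 1 N * g)"
  unfolding low_def by (simp add: coeff_monom_mult)

lemma low_sq: "low m N f \<Longrightarrow> low (m * m) N (f * f)"
  unfolding low_def coeff_mult
  by (auto intro!: dvd_sum mult_dvd_mono)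

lemma low_smult: "low m N f \<Longrightarrow> low (a * m) N (smult a f)"
  unfolding low_def by (auto intro!: mult_dvd_mono)

lemma dvd_of_nat_q: "[:int q:] dvd (of_nat q * (f :: int poly))"
  unfolding of_nat_poly by (rule dvd_triv_left)

lemma He_q:
  assumes "prime q" "odd q"
  shows "[:int q:] dvd (He q - monom 1 q)"
proof (subst const_poly_dvd_iff, intro allI)
  fix i
  show "int q dvd coeff (He q - monom 1 q) i"
  proof (cases "i = 0 \<or> q \<le> i")
    case True
    then show ?thesis
    proof
      assume "i = 0" then show ?thesis using assms He_parity[of q 0] by (simp add: coeff_monom)
    next
      assume "q \<le> i"
      then show ?thesis using He_top[of q] by (cases "i = q") (auto simp: coeff_monom)
    qed
  next
    case False
    then obtain j where j: "i = Suc j" "Suc j < q" by (cases i) auto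
    have "coeff (pderiv (He q)) j = int (Suc j) * coeff (He q) i"
      using j by (simp add: coeff_pderiv)
    also have "coeff (pderiv (He q)) j = int q * coeff (He (q - 1)) j"
      by (simp add: He_pderiv_aux)
    finally have "int q dvd int i * coeff (He q) i" using j by (metis dvd_triv_left)
    moreover have "\<not> int q dvd int i" using j by (simp only: int_dvd_int_iff) (auto dest: nat_dvd_not_less)
    moreover have "prime (int q)" using assms by simp
    ultimately have "int q dvd coeff (He q) i" using prime_dvd_mult_iff by blast
    then show ?thesis using j by (simp add: coeff_monom)
  qed
qed

lemma alg3:
  fixes A2 A1 A0 B2 B1 B0 X M :: "'a::comm_ring_1" and q j :: nat
  assumes "A2 = X*A1 - of_nat (Suc (q+j))*A0" "B2 = X*B1 - of_nat (Suc j)*B0"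
  shows "A2 - M*B2 = X*(A1 - M*B1) - of_nat (Suc (q+j)) * (A0 - M*B0) - of_nat q * (M*B0)"
  unfolding assms by (simp add: algebra_simps)

lemma He_shift:
  assumes "prime q" "odd q"
  shows "[:int q:] dvd (He (q + j) - monom 1 q * He j)"
proof (induction j rule: hermite_He.induct)
  case 1 then show ?case using He_q[OF assms] by simp
next
  case 2
  obtain r where r: "q = Suc r" using assms prime_gt_0_nat not0_implies_Suc by blast
  have "He (q + 1) = [:0,1:] * He q - of_nat q * He r"
    by (simp only: r add_Suc_right Suc_eq_plus1[symmetric] add_0_right hermite_He.simps of_nat_mult_conv_smult)
  then have eq: "He (q + Suc 0) - monom 1 q * He (Suc 0) = [:0,1:] * (He q - monom 1 q) - of_nat q * He r"
    by (simp add: algebra_simps)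
  show ?case unfolding eq by (intro dvd_diff dvd_mult He_q[OF assms] dvd_of_nat_q)
next
  case (3 j)
  have e1: "He (q + Suc (Suc j)) = [:0,1:] * He (q + Suc j) - of_nat (Suc (q + j)) * He (q + j)"
    by (simp only: add_Suc_right hermite_He.simps of_nat_mult_conv_smult)
  have e2: "He (Suc (Suc j)) = [:0,1:] * He (Suc j) - of_nat (Suc j) * He j"
    by (simp only: hermite_He.simps of_nat_mult_conv_smult)
  show ?case unfolding alg3[OF e1 e2, of "monom 1 q"]
    by (intro dvd_diff dvd_mult 3 dvd_of_nat_q)
qed

lemma alg4:
  fixes S A B M :: "'a::comm_ring_1" and r :: nat
  shows "of_nat (Suc r) * S - of_nat r * (B * A) - M * B = of_nat (Suc r) * S - of_nat r * (B * (A - M)) - of_nat (Suc r) * (B * M)"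
  by (simp add: algebra_simps)

lemma W_q1:
  assumes "prime q" "odd q"
  shows "[:int q:] dvd (R_nn (q - 1) - monom 1 q * He (q - 2))"
proof -
  obtain r where r: "q = Suc (Suc r)" using assms
    by (metis One_nat_def Suc_pred even_Suc_Suc_iff odd_pos prime_gt_1_nat bot_nat_0.not_eq_extremum less_Suc_eq_0_disj less_numeral_extra(4) not_less_less_Suc_eq)
  have "R_nn (q - 1) - monom 1 q * He (q - 2) = of_nat (Suc (Suc r)) * (He (Suc r) * He (Suc r)) - of_nat (Suc r) * (He r * He (Suc (Suc r))) - monom 1 q * He r"
    unfolding r by (simp only: diff_Suc_1 R_alt[of "Suc r"] numeral_2_eq_2 diff_Suc_Suc minus_nat.diff_0)
  also have "\<dots> = of_nat q * (He (Suc r) * He (Suc r)) - of_nat (Suc r) * (He r * (He q - monom 1 q)) - of_nat q * (He r * monom 1 q)"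
    unfolding r by (rule alg4)
  finally have eq: "R_nn (q - 1) - monom 1 q * He (q - 2) = of_nat q * (He (Suc r) * He (Suc r)) - of_nat (Suc r) * (He r * (He q - monom 1 q)) - of_nat q * (He r * monom 1 q)" .
  show ?thesis unfolding eq
    by (intro dvd_diff dvd_mult He_q[OF assms] dvd_of_nat_q)
qed


lemma low_dvd: "low m N f \<Longrightarrow> m' dvd m \<Longrightarrow> low m' N f"
  unfolding low_def using dvd_trans by blast

lemma He_low: "prime q \<Longrightarrow> odd q \<Longrightarrow> low (int q) q (He (q + j))"
  by (rule low_cong[OF He_shift low_M])

lemma W_low: "prime q \<Longrightarrow> odd q \<Longrightarrow> low (int q) q (R_nn (q - 1))"
  by (rule low_cong[OF W_q1 low_M])

lemma M2: "monom (1::int) (2*q) = monom 1 q * monom 1 q"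
  by (simp add: mult_monom mult_2)

lemma alg5:
  fixes T H B Rj M :: "'a::comm_ring_1" and q j :: nat
  shows "of_nat (Suc (q+j)) * T + H*H - M*M*(of_nat (Suc j) * Rj + B*B) =
    of_nat (Suc (q+j)) * (T - M*M*Rj) + of_nat q*(M*M*Rj) + (H - M*B)*(H+M*B)"
  by (simp add: algebra_simps)

lemma T_induct:
  assumes "prime q" "odd q"
  shows "\<exists>c T. R_nn (q + j) = smult (int q * c) (R_nn (q - 1)) + T \<and> low (int q * int q) q T
     \<and> [:int q:] dvd (T - monom 1 (2*q) * R_nn j)"
proof (induction j)
  case 0
  obtain r where r: "q = Suc r" using assms prime_gt_0_nat not0_implies_Suc by blast
  have e: "R_nn q = smult (int q * 1) (R_nn (q - 1)) + He q * He q"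
    unfolding r using R_rec[of r] by (simp only: of_nat_mult_conv_smult mult_1_right diff_Suc_1)
  have l: "low (int q * int q) q (He q * He q)" using low_sq[OF He_low[OF assms, of 0]] by simp
  have "He q * He q - monom 1 (2*q) * R_nn 0 = (He q - monom 1 q) * (He q + monom 1 q)"
    unfolding M2 R_0 by (simp add: algebra_simps)
  then have d: "[:int q:] dvd (He q * He q - monom 1 (2*q) * R_nn 0)"
    using He_q[OF assms] by simp
  show ?case
    apply (rule exI[of _ 1], rule exI[of _ "He q * He q"])
    using e l d by simp
next
  case (Suc j)
  then obtain c T where cT: "R_nn (q + j) = smult (int q * c) (R_nn (q - 1)) + T"
    "low (int q * int q) q T" "[:int q:] dvd (T - monom 1 (2*q) * R_nn j)" by blast
  define H where "H = He (q + Suc j)"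
  define a where "a = Suc (q + j)"
  have "R_nn (q + Suc j) = of_nat a * R_nn (q + j) + H * H"
    unfolding a_def H_def by (simp only: add_Suc_right R_rec)
  also have "\<dots> = smult (int q * (int a * c)) (R_nn (q - 1)) + (of_nat a * T + H * H)"
    unfolding cT(1) by (simp add: of_nat_mult_conv_smult smult_add_right algebra_simps)
  finally have e: "R_nn (q + Suc j) = smult (int q * (int a * c)) (R_nn (q - 1)) + (of_nat a * T + H * H)" .
  have l: "low (int q * int q) q (of_nat a * T + H * H)"
    unfolding H_def by (intro low_add low_mult_left cT(2) low_sq He_low assms)
  have "of_nat a * T + H * H - monom 1 (2*q) * R_nn (Suc j) =
    of_nat a * (T - monom 1 (2*q) * R_nn j) + of_nat q * (monom 1 (2*q) * R_nn j) + (H - monom 1 q * He (Suc j)) * (H + monom 1 q * He (Suc j))"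
    unfolding a_def M2 R_rec by (rule alg5)
  moreover have "[:int q:] dvd \<dots>"
    unfolding H_def
    by (intro dvd_add dvd_mult dvd_mult2 cT(3) dvd_of_nat_q He_shift assms)
  ultimately have "[:int q:] dvd (of_nat a * T + H * H - monom 1 (2*q) * R_nn (Suc j))" by simp
  then show ?case using e l by blast
qed

lemma R_facts:
  assumes "prime q" "odd q" "q \<le> n"
  shows "low (int q * int q) q (R_nn n)" "[:int q:] dvd (R_nn n - monom 1 (2*q) * R_nn (n - q))"
proof -
  obtain c T where cT: "R_nn (q + (n - q)) = smult (int q * c) (R_nn (q - 1)) + T"
    "low (int q * int q) q T" "[:int q:] dvd (T - monom 1 (2*q) * R_nn (n - q))"
    using T_induct[OF assms(1,2)] by blast
  have n: "q + (n - q) = n" using assms by simp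
  have "low (int q * c * int q) q (smult (int q * c) (R_nn (q - 1)))"
    by (rule low_smult[OF W_low[OF assms(1,2)]])
  then have "low (int q * int q) q (smult (int q * c) (R_nn (q - 1)))"
    by (rule low_dvd) simp
  then show "low (int q * int q) q (R_nn n)" using cT(1,2) n by (metis low_add)
  have "R_nn n - monom 1 (2*q) * R_nn (n - q) = [:int q:] * smult c (R_nn (q - 1)) + (T - monom 1 (2*q) * R_nn (n - q))"
    using cT(1) n by (simp add: algebra_simps)
  then show "[:int q:] dvd (R_nn n - monom 1 (2*q) * R_nn (n - q))"
    using cT(3) by (metis dvd_add dvd_triv_left)
qed

lemma R_parity: "odd i \<Longrightarrow> coeff (R_nn n) i = 0"
proof (induction n)
  case 0 then show ?case by (cases i) (auto simp: R_0)
next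
  case (Suc n)
  have "coeff (He (Suc n) * He (Suc n)) i = 0"
    unfolding coeff_mult
  proof (intro sum.neutral ballI)
    fix j assume "j \<in> {..i}"
    then have "odd (Suc n + j) \<or> odd (Suc n + (i - j))" using Suc.prems by auto
    then show "coeff (He (Suc n)) j * coeff (He (Suc n)) (i - j) = 0"
      by (elim disjE) (simp_all add: He_parity)
  qed
  then show ?case unfolding R_rec of_nat_mult_conv_smult using Suc by simp
qed

fun D :: "nat \<Rightarrow> int" where
  "D 0 = 1"
| "D (Suc n) = (if odd (Suc n) then int (Suc n) else 1) * D n"

lemma He0_sq: "(coeff (He k) 0)^2 = (if even k then (D k)^2 else 0)"
proof (induction k rule: hermite_He.induct)
  case 1 then show ?case by simp
next
  case 2 then show ?case by simp
next
  case (3 k)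
  have h: "coeff (He (Suc (Suc k))) 0 = - int (Suc k) * coeff (He k) 0" by (simp add: algebra_simps)
  have "(coeff (He (Suc (Suc k))) 0)^2 = (int (Suc k))^2 * (coeff (He k) 0)^2"
    unfolding h by (simp add: power2_eq_square algebra_simps)
  then show ?case using 3 by (auto simp: power_mult_distrib power2_eq_square algebra_simps)
qed

lemma R_const: "coeff (R_nn n) 0 = (if even n then int (Suc n) else 1) * (D n)^2"
proof (induction n)
  case 0 then show ?case by (simp add: R_0)
next
  case (Suc n)
  have "coeff (R_nn (Suc n)) 0 = int (Suc n) * coeff (R_nn n) 0 + (coeff (He (Suc n)) 0)^2"
    unfolding R_rec of_nat_mult_conv_smult by (simp add: coeff_mult_0 power2_eq_square)
  then show ?case using Suc He0_sq[of "Suc n"] by (auto simp: power_mult_distrib power2_eq_square algebra_simps)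
qed


lemma sum_rest_dvd:
  fixes f :: "nat \<Rightarrow> int"
  assumes "finite A" "x \<in> A" "\<forall>i\<in>A-{x}. m dvd f i"
  shows "m dvd (sum f A - f x)"
proof -
  have "sum f A = f x + sum f (A - {x})" using sum.remove[OF assms(1,2)] .
  moreover have "m dvd sum f (A - {x})" using assms(3) by (intro dvd_sum) auto
  ultimately show ?thesis by simp
qed

lemma first_index:
  fixes P Q :: "int poly" and p :: int
  assumes "prime p" "\<forall>i<a. p dvd coeff P i" "\<not> p dvd coeff P a" "\<forall>i<b. p dvd coeff Q i" "\<not> p dvd coeff Q b"
  shows "\<forall>k<a+b. p dvd coeff (P*Q) k" "\<not> p dvd coeff (P*Q) (a+b)"
proof -
  show "\<forall>k<a+b. p dvd coeff (P*Q) k"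
  proof (intro allI impI)
    fix k assume k: "k < a + b"
    show "p dvd coeff (P*Q) k" unfolding coeff_mult
    proof (intro dvd_sum)
      fix i assume "i \<in> {..k}"
      then show "p dvd coeff P i * coeff Q (k - i)"
        using assms(2,4) k by (cases "i < a") auto
    qed
  qed
  define f where "f = (\<lambda>i. coeff P i * coeff Q (a + b - i))"
  have "p dvd (sum f {..a+b} - f a)"
  proof (rule sum_rest_dvd)
    show "\<forall>i\<in>{..a + b} - {a}. p dvd f i"
    proof
      fix i assume "i \<in> {..a + b} - {a}"
      then show "p dvd f i" unfolding f_def
        using assms(2,4) by (cases "i < a") auto
    qed
  qed auto
  then have "p dvd (coeff (P*Q) (a+b) - coeff P a * coeff Q b)"
    unfolding coeff_mult f_def by simp
  moreover have "\<not> p dvd coeff P a * coeff Q b" using assms(1,3,5) prime_dvd_mult_iff by blast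
  ultimately show "\<not> p dvd coeff (P*Q) (a+b)"
  proof -
    assume h1: "p dvd (coeff (P*Q) (a+b) - coeff P a * coeff Q b)" and h2: "\<not> p dvd coeff P a * coeff Q b"
    show ?thesis
    proof
      assume "p dvd coeff (P*Q) (a+b)"
      then have "p dvd coeff (P*Q) (a+b) - (coeff (P*Q) (a+b) - coeff P a * coeff Q b)" using h1 by (rule dvd_diff)
      then show False using h2 by simp
    qed
  qed
qed

lemma small_case:
  fixes P Q :: "int poly" and p :: int
  assumes "prime p" "0 < a" "\<forall>i<a. p dvd coeff P i" "\<not> p dvd coeff P a" "\<forall>i<b. p dvd coeff Q i" "a < b"
    "p^2 dvd coeff (P*Q) a" "\<not> p^3 dvd coeff (P*Q) 0"
  shows False
proof -
  define f where "f = (\<lambda>i. coeff P i * coeff Q (a - i))"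
  have "p^2 dvd (sum f {..a} - f a)"
  proof (rule sum_rest_dvd)
    show "\<forall>i\<in>{..a} - {a}. p^2 dvd f i"
    proof
      fix i assume i: "i \<in> {..a} - {a}"
      then have "p dvd coeff P i" "p dvd coeff Q (a - i)" using assms(3,5,6) by auto
      then show "p^2 dvd f i" unfolding f_def by (simp add: power2_eq_square mult_dvd_mono)
    qed
  qed auto
  then have "p^2 dvd (coeff (P*Q) a - coeff P a * coeff Q 0)"
    unfolding coeff_mult f_def by simp
  then have "p^2 dvd coeff (P*Q) a - (coeff (P*Q) a - coeff P a * coeff Q 0)"
    using assms(7) by (metis dvd_diff)
  then have "p^2 dvd coeff P a * coeff Q 0" by simp
  moreover have "p dvd coeff Q 0" using assms(2,5,6) by auto
  then obtain \<beta> where b: "coeff Q 0 = p * \<beta>" by (elim dvdE)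
  ultimately have "p * p dvd p * (coeff P a * \<beta>)" by (simp add: power2_eq_square algebra_simps)
  then have "p dvd coeff P a * \<beta>" using assms(1) by auto
  then have "p dvd \<beta>" using assms(1,4) prime_dvd_mult_iff by blast
  moreover have "p dvd coeff P 0" using assms(2,3) by simp
  ultimately have "p^3 dvd coeff P 0 * coeff Q 0" unfolding b
    by (simp add: power3_eq_cube mult_dvd_mono mult.assoc)
  then show False using assms(8) by (simp add: coeff_mult_0)
qed

lemma mid_case:
  fixes P Q :: "int poly" and p :: int
  assumes "prime p" "0 < q" "\<forall>i<q. p dvd coeff P i" "\<forall>i<q. p dvd coeff Q i"
    "coeff (P*Q) q = 0" "\<forall>z. \<not> p dvd (z^2 + (coeff (P*Q) 0 div p^2) * coeff (P*Q) (2*q))"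
  shows False
proof -
  obtain \<alpha> where a: "coeff P 0 = p * \<alpha>" using assms(2,3) by (meson dvdE)
  obtain \<beta> where b: "coeff Q 0 = p * \<beta>" using assms(2,4) by (meson dvdE)
  have p0: "p \<noteq> 0" using assms(1) by auto
  have c0: "coeff (P*Q) 0 div p^2 = \<alpha> * \<beta>"
    using p0 by (simp add: coeff_mult_0 a b power2_eq_square algebra_simps)
  define f where "f = (\<lambda>i. coeff P i * coeff Q (q - i))"
  have "p^2 dvd (sum f ({..q} - {q}) - f 0)"
  proof (rule sum_rest_dvd)
    show "\<forall>i\<in>{..q} - {q} - {0}. p^2 dvd f i"
    proof
      fix i assume i: "i \<in> {..q} - {q} - {0}"
      then have "p dvd coeff P i" "p dvd coeff Q (q - i)" using assms(3,4) by auto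
      then show "p^2 dvd f i" unfolding f_def by (simp add: power2_eq_square mult_dvd_mono)
    qed
  qed (use assms(2) in auto)
  moreover have "sum f {..q} = f q + sum f ({..q} - {q})" by (rule sum.remove) auto
  moreover have "sum f {..q} = 0" using assms(5) unfolding f_def coeff_mult by simp
  ultimately have "sum f ({..q} - {q}) = - f q" by simp
  with \<open>p^2 dvd (sum f ({..q} - {q}) - f 0)\<close> have "p^2 dvd (- f q - f 0)" by simp
  moreover have "- f q - f 0 = - p * (\<beta> * coeff P q + \<alpha> * coeff Q q)"
    unfolding f_def by (simp add: a b algebra_simps)
  ultimately have "p * p dvd - p * (\<beta> * coeff P q + \<alpha> * coeff Q q)"
    by (simp add: power2_eq_square)
  then have "p * p dvd p * (\<beta> * coeff P q + \<alpha> * coeff Q q)" by (metis dvd_minus_iff minus_mult_left)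
  then have d1: "p dvd (\<beta> * coeff P q + \<alpha> * coeff Q q)" using p0 by simp
  define g where "g = (\<lambda>i. coeff P i * coeff Q (2*q - i))"
  have "p dvd (sum g {..2*q} - g q)"
  proof (rule sum_rest_dvd)
    show "\<forall>i\<in>{..2*q} - {q}. p dvd g i"
    proof
      fix i assume "i \<in> {..2*q} - {q}"
      then show "p dvd g i" unfolding g_def
        using assms(3,4) by (cases "i < q") auto
    qed
  qed auto
  then have d2: "p dvd (coeff (P*Q) (2*q) - coeff P q * coeff Q q)"
    unfolding coeff_mult g_def by (simp add: mult_2)
  define z where "z = \<beta> * coeff P q"
  have "z^2 + (\<alpha> * \<beta>) * coeff (P*Q) (2*q) =
     z * (\<beta> * coeff P q + \<alpha> * coeff Q q) + (\<alpha> * \<beta>) * (coeff (P*Q) (2*q) - coeff P q * coeff Q q)"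
    unfolding z_def by (simp add: power2_eq_square algebra_simps)
  then have "p dvd (z^2 + (\<alpha> * \<beta>) * coeff (P*Q) (2*q))" using d1 d2 by simp
  then show False using assms(6) c0 by metis
qed


lemma first_exists:
  fixes P Q :: "int poly" and p :: int
  assumes "\<not> p dvd coeff (P*Q) k"
  shows "\<exists>a. (\<forall>i<a. p dvd coeff P i) \<and> \<not> p dvd coeff P a"
proof -
  have "\<exists>i. \<not> p dvd coeff P i"
  proof (rule ccontr)
    assume "\<not> (\<exists>i. \<not> p dvd coeff P i)"
    then have "p dvd coeff (P*Q) k" unfolding coeff_mult by (auto intro!: dvd_sum)
    then show False using assms by simp
  qed
  then have "\<not> p dvd coeff P (LEAST i. \<not> p dvd coeff P i)" by (rule LeastI_ex)
  moreover have "\<forall>i<(LEAST i. \<not> p dvd coeff P i). p dvd coeff P i" using not_less_Least by blast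
  ultimately show ?thesis by blast
qed

lemma sum_index:
  fixes P Q :: "int poly" and p :: int
  assumes "prime p" "\<forall>i<a. p dvd coeff P i" "\<not> p dvd coeff P a" "\<forall>i<b. p dvd coeff Q i" "\<not> p dvd coeff Q b"
    "\<forall>k<2*q. p dvd coeff (P*Q) k" "\<not> p dvd coeff (P*Q) (2*q)"
  shows "a + b = 2 * q"
proof -
  note fi = first_index[OF assms(1-5)]
  have "\<not> a + b < 2 * q" using fi(2) assms(6) by blast
  moreover have "\<not> 2 * q < a + b" using fi(1) assms(7) by blast
  ultimately show ?thesis by simp
qed

lemma side:
  fixes P Q :: "int poly" and p :: int
  assumes "prime p" "\<not> p dvd coeff P 0"
    "\<forall>k<2*q. p dvd coeff (P*Q) k" "\<not> p dvd coeff (P*Q) (2*q)"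
  shows "coeff Q (2*q) \<noteq> 0"
proof -
  obtain b where b: "\<forall>i<b. p dvd coeff Q i" "\<not> p dvd coeff Q b"
    using first_exists[of p Q P] assms(4) by (auto simp: mult.commute)
  have "0 + b = 2 * q" by (rule sum_index[OF assms(1) _ assms(2) b assms(3,4)]) simp
  then show ?thesis using b(2) by auto
qed

lemma factor_core:
  fixes P Q :: "int poly" and p :: int and q :: nat
  assumes "prime p" "0 < q"
    "\<forall>k<q. p^2 dvd coeff (P*Q) k" "\<forall>k<2*q. p dvd coeff (P*Q) k"
    "coeff (P*Q) q = 0" "\<not> p dvd coeff (P*Q) (2*q)" "\<not> p^3 dvd coeff (P*Q) 0"
    "\<forall>z. \<not> p dvd (z^2 + (coeff (P*Q) 0 div p^2) * coeff (P*Q) (2*q))"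
    "p dvd coeff P 0" "p dvd coeff Q 0"
  shows False
proof -
  obtain a where a: "\<forall>i<a. p dvd coeff P i" "\<not> p dvd coeff P a"
    using first_exists[of p P Q] assms(6) by blast
  obtain b where b: "\<forall>i<b. p dvd coeff Q i" "\<not> p dvd coeff Q b"
    using first_exists[of p Q P] assms(6) by (auto simp: mult.commute)
  have ab: "a + b = 2 * q" by (rule sum_index[OF assms(1) a b assms(4,6)])
  have a0: "0 < a" using a assms(9) by (cases a) auto
  have b0: "0 < b" using b assms(10) by (cases b) auto
  consider "a < q" | "b < q" | "a = q \<and> b = q" using ab by linarith
  then show False
  proof cases
    case 1
    show False
      by (rule small_case[OF assms(1) a0 a b(1)]) (use 1 ab assms(3,7) in auto)
  next
    case 2
    show False
      by (rule small_case[OF assms(1) b0 b a(1)]) (use 2 ab assms(3,7) in \<open>auto simp: mult.commute\<close>)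
  next
    case 3
    show False
      by (rule mid_case[OF assms(1,2)]) (use 3 a b assms(5,8) in auto)
  qed
qed



lemma fermat_aux:
  assumes "prime q"
  shows "int q dvd int a ^ q - int a"
proof (induction a)
  case 0 then show ?case using assms prime_gt_0_nat by (simp add: power_0_left)
next
  case (Suc a)
  have q0: "q \<noteq> 0" using assms by auto
  define f where "f = (\<lambda>k. of_nat (q choose k) * int a ^ k * 1 ^ (q - k))"
  have "(int a + 1) ^ q = (\<Sum>k\<le>q. f k)" unfolding f_def by (rule binomial_ring)
  also have "\<dots> = f q + (\<Sum>k\<in>{..q} - {q}. f k)" by (rule sum.remove) auto
  also have "(\<Sum>k\<in>{..q} - {q}. f k) = f 0 + (\<Sum>k\<in>{..q} - {q} - {0}. f k)" using q0 by (intro sum.remove) auto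
  finally have e: "(int a + 1) ^ q = int a ^ q + 1 + (\<Sum>k\<in>{..q} - {q} - {0}. f k)"
    unfolding f_def using q0 by simp
  have "int q dvd (\<Sum>k\<in>{..q} - {q} - {0}. f k)"
  proof (intro dvd_sum)
    fix k assume "k \<in> {..q} - {q} - {0}"
    then have "q dvd (q choose k)" using assms q0 by (intro dvd_choose_prime) auto
    then have "int q dvd of_nat (q choose k)" by (simp only: int_dvd_int_iff)
    then show "int q dvd f k" unfolding f_def by simp
  qed
  then have "int q dvd ((int a + 1) ^ q - int a ^ q - 1) + (int a ^ q - int a)"
    using Suc e by simp
  then show ?case by (simp add: algebra_simps)
qed

lemma fermat_int:
  assumes "prime q" "\<not> int q dvd y"
  shows "[y ^ (q - 1) = 1] (mod int q)"
proof -
  define a where "a = nat (y mod int q)"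
  have q0: "int q > 0" using assms prime_gt_0_nat by simp
  have iy: "int a = y mod int q" unfolding a_def using q0 by simp
  have c: "[int a = y] (mod int q)" unfolding iy by simp
  have "[y ^ q = int a ^ q] (mod int q)" using c by (metis cong_pow cong_sym)
  moreover have "[int a ^ q = int a] (mod int q)" using fermat_aux[OF assms(1), of a]
    by (simp add: cong_iff_dvd_diff)
  ultimately have "[y ^ q = y] (mod int q)" using c by (metis cong_trans)
  moreover obtain r where r: "q = Suc r" using assms(1) prime_gt_0_nat not0_implies_Suc by blast
  moreover have "y ^ Suc r - y = y * (y ^ r - 1)" by (simp add: algebra_simps)
  ultimately have "int q dvd y * (y ^ (q - 1) - 1)"
    by (simp add: cong_iff_dvd_diff)
  then have "int q dvd y ^ (q - 1) - 1" using assms by (simp add: prime_dvd_mult_iff)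
  then show ?thesis by (simp add: cong_iff_dvd_diff)
qed

lemma no_sqrt_minus_one:
  assumes "prime q" "q mod 4 = 3" "int q dvd z^2 + y^2" "\<not> int q dvd y"
  shows False
proof -
  have pz: "\<not> int q dvd z"
  proof
    assume "int q dvd z"
    then have "int q dvd z^2" by (simp add: power2_eq_square)
    then have "int q dvd y^2" using assms(3) by (metis dvd_add_right_iff)
    then show False using assms(1,4) by (metis prime_dvd_power prime_nat_int_transfer)
  qed
  define t where "t = q div 4"
  have qt: "q = 4 * t + 3" using div_mult_mod_eq[of q 4] assms(2) unfolding t_def by linarith
  define k where "k = 2 * t + 1"
  have k: "q - 1 = 2 * k" "odd k" unfolding k_def using qt by simp_all
  have fy: "[y ^ (q - 1) = 1] (mod int q)" by (rule fermat_int[OF assms(1,4)])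
  have fz: "[z ^ (q - 1) = 1] (mod int q)" by (rule fermat_int[OF assms(1) pz])
  have "[z^2 = - (y^2)] (mod int q)" using assms(3) unfolding cong_iff_dvd_diff by simp
  then have "[(z^2)^k = (- (y^2))^k] (mod int q)" by (rule cong_pow)
  moreover have "(z^2)^k = z^(q-1)" "(- (y^2))^k = - (y^(q-1))" using k
    by (simp_all add: power_mult[symmetric])
  ultimately have "[z^(q-1) = - (y^(q-1))] (mod int q)" by simp
  moreover have "[- (y^(q-1)) = -1] (mod int q)" using fy by (simp add: cong_minus_minus_iff)
  ultimately have "[1 = -1] (mod int q)" using fz by (metis cong_sym cong_trans)
  then have "int q dvd 2" unfolding cong_iff_dvd_diff by simp
  then have "int q dvd int 2" by simp
  then have "q dvd 2" by (simp only: int_dvd_int_iff)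
  then have "q \<le> 2" by (simp add: dvd_imp_le)
  then show False using assms(2) by simp
qed



lemma odd_not_dvd:
  assumes "odd x" "q < x" "x < 3 * q"
  shows "\<not> int q dvd int x"
proof
  assume "int q dvd int x"
  then have "q dvd x" by (simp only: int_dvd_int_iff)
  then obtain t where t: "x = q * t" by (elim dvdE)
  have "1 < t" using assms(2) t by (metis mult.right_neutral nat_less_le nat_mult_le_cancel_disj not_less_eq less_one mult_0_right zero_less_iff_neq_zero linorder_neqE_nat)
  moreover have "t < 3" using assms(3) t by simp
  ultimately have "t = 2" by simp
  then show False using assms(1) t by simp
qed

lemma D_pos: "D n > 0"
  by (induction n) auto

lemma D_small: "prime q \<Longrightarrow> n < q \<Longrightarrow> \<not> int q dvd D n"
proof (induction n)
  case 0
  then have "q \<noteq> 1" using not_prime_1 by blast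
  then show ?case by simp
next
  case (Suc n)
  have pq: "prime (int q)" using Suc by simp
  have f: "\<not> int q dvd (if odd (Suc n) then int (Suc n) else 1)"
  proof (cases "odd (Suc n)")
    case True
    have "\<not> q dvd Suc n" using Suc.prems by (auto dest: dvd_imp_le)
    then show ?thesis using True by (simp only: if_True not_False_eq_True int_dvd_int_iff)
  next
    case False
    have "q \<noteq> 1" using Suc.prems by auto
    then show ?thesis using False by simp
  qed
  have "\<not> int q dvd D n" using Suc by simp
  then show ?case using f pq prime_dvd_mult_iff by (metis D.simps(2))
qed

lemma D_mid: "prime q \<Longrightarrow> odd q \<Longrightarrow> q \<le> n \<Longrightarrow> n < 3 * q \<Longrightarrow> \<exists>E. D n = int q * E \<and> \<not> int q dvd E"
proof (induction n)
  case 0 then show ?case using prime_gt_0_nat by fastforce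
next
  case (Suc n)
  have pq: "prime (int q)" using Suc by simp
  show ?case
  proof (cases "Suc n = q")
    case True
    have "odd (Suc n)" using Suc.prems True by simp
    then have "D (Suc n) = int (Suc n) * D n" by (simp only: D.simps if_True not_False_eq_True)
    then have "D (Suc n) = int q * D n" using True by simp
    moreover have "\<not> int q dvd D n" using D_small[of q n] Suc.prems True by simp
    ultimately show ?thesis by blast
  next
    case False
    then obtain E where E: "D n = int q * E" "\<not> int q dvd E" using Suc by auto
    define f where "f = (if odd (Suc n) then int (Suc n) else 1)"
    have f: "\<not> int q dvd f"
    proof (cases "odd (Suc n)")
      case True
      then show ?thesis unfolding f_def using odd_not_dvd[of "Suc n" q] Suc.prems False by simp
    next
      case False
      have "q \<noteq> 1" using Suc.prems by auto
      then show ?thesis unfolding f_def using False by simp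
    qed
    have "D (Suc n) = int q * (f * E)" unfolding f_def using E by simp
    moreover have "\<not> int q dvd f * E" using f E(2) pq prime_dvd_mult_iff by blast
    ultimately show ?thesis by blast
  qed
qed

lemma degree_R: "degree (R_nn n) \<le> 2 * n"
proof -
  have "degree (He n * pderiv (He (Suc n))) \<le> 2 * n"
  proof -
    have "degree (He n * pderiv (He (Suc n))) \<le> degree (He n) + degree (pderiv (He (Suc n)))"
      by (rule degree_mult_le)
    also have "\<dots> \<le> n + n" using He_degree[of n] He_degree[of "Suc n"] degree_pderiv[of "He (Suc n)"]
      by linarith
    finally show ?thesis by simp
  qed
  moreover have "degree (pderiv (He n) * He (Suc n)) \<le> 2 * n"
  proof -
    have "degree (pderiv (He n) * He (Suc n)) \<le> degree (pderiv (He n)) + degree (He (Suc n))"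
      by (rule degree_mult_le)
    also have "\<dots> \<le> (n - 1) + Suc n" using He_degree[of n] He_degree[of "Suc n"] degree_pderiv[of "He n"]
      by linarith
    finally show ?thesis by (cases n) auto
  qed
  ultimately show ?thesis unfolding R_nn_def wronskian2_def
    by (meson degree_diff_le)
qed

theorem mainTheorem14:
  fixes n q :: nat
  assumes "n \<ge> 3"
    and "\<exists>m::nat. n + 1 = m ^ 2"
    and "prime q" and "q \<le> n"
    and "3 * q > 2 * n"
    and "q mod 4 = 3"
  shows "\<not> (\<exists>p :: int poly. p dvd R_nn n \<and> q \<le> degree p \<and> degree p \<le> n)"
proof
  assume "\<exists>P :: int poly. P dvd R_nn n \<and> q \<le> degree P \<and> degree P \<le> n"
  then obtain P Q where PQ: "R_nn n = P * Q" and dP: "q \<le> degree P" "degree P \<le> n"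
    by (auto elim: dvdE)
  obtain s where s: "n + 1 = s^2" using assms(2) by blast
  have qt: "q = 4 * (q div 4) + 3" using div_mult_mod_eq[of q 4] assms(6) by linarith
  have oq: "odd q" by (subst qt) simp
  have q3: "q \<ge> 3" using qt by linarith
  define p where "p = int q"
  have pp: "prime p" unfolding p_def using assms(3) by simp
  define m where "m = n - q"
  have nm: "n = q + m" unfolding m_def using assms(4) by simp
  have m2: "2 * m < q" using assms(5) nm by linarith
  define R where "R = R_nn n"
  note RF = R_facts[OF assms(3) oq assms(4)]
  have F1: "\<forall>k<q. p^2 dvd coeff R k"
    using RF(1) unfolding low_def R_def p_def by (simp add: power2_eq_square)
  have Fmod: "\<forall>k. p dvd coeff R k - coeff (monom 1 (2*q) * R_nn m) k"
    using RF(2) unfolding const_poly_dvd_iff R_def p_def m_def coeff_diff .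
  have F2: "\<forall>k<2*q. p dvd coeff R k"
  proof (intro allI impI)
    fix k assume "k < 2*q"
    then show "p dvd coeff R k" using Fmod[rule_format, of k] by (simp add: coeff_monom_mult)
  qed
  have F3: "p dvd coeff R (2*q) - coeff (R_nn m) 0" using Fmod[rule_format, of "2*q"] by (simp add: coeff_monom_mult)
  have F4: "coeff R q = 0" unfolding R_def using R_parity oq by blast
  define en where "en = (if even n then int (Suc n) else 1)"
  define em where "em = (if even m then int (Suc m) else 1)"
  have R0: "coeff R 0 = en * (D n)^2" unfolding R_def en_def by (rule R_const)
  have Rm0: "coeff (R_nn m) 0 = em * (D m)^2" unfolding em_def by (rule R_const)
  obtain E where E: "D n = p * E" "\<not> p dvd E" using D_mid[OF assms(3) oq assms(4)] assms(5) unfolding p_def by auto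
  have Dm: "\<not> p dvd D m" using D_small[OF assms(3)] m2 unfolding p_def by simp
  have en: "\<not> p dvd en"
  proof (cases "even n")
    case True
    then show ?thesis unfolding en_def p_def using odd_not_dvd[of "Suc n" q] assms(4,5) by simp
  next
    case False
    have "q \<noteq> 1" using assms(3) by auto
    then show ?thesis unfolding en_def p_def using False by simp
  qed
  have em: "\<not> p dvd em"
  proof (cases "even m")
    case True
    have "\<not> q dvd Suc m" using m2 q3 by (auto dest: dvd_imp_le)
    then show ?thesis unfolding em_def p_def using True by (simp only: if_True not_False_eq_True int_dvd_int_iff)
  next
    case False
    have "q \<noteq> 1" using assms(3) by auto
    then show ?thesis unfolding em_def p_def using False by simp
  qed
  have ee: "p dvd en * em - int s ^ 2"
  proof (cases "even n")
    case True
    then have "odd m" using nm oq by simp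
    then have "en * em = int (n + 1)" unfolding en_def em_def using True by simp
    also have "\<dots> = int s ^ 2" unfolding s by simp
    finally have "en * em = int s ^ 2" .
    then show ?thesis by simp
  next
    case False
    then have "even m" using nm oq by simp
    then have "en * em = int (m + 1)" unfolding en_def em_def using False by simp
    moreover have "int s ^ 2 = int (n + 1)" unfolding s by simp
    ultimately have "en * em - int s ^ 2 = - p" unfolding p_def using nm by simp
    then show ?thesis by simp
  qed
  have Dm0: "\<not> p dvd coeff (R_nn m) 0" unfolding Rm0 using pp em Dm
    by (simp add: prime_dvd_mult_iff prime_dvd_power_iff)
  have F5: "\<not> p dvd coeff R (2*q)"
  proof
    assume "p dvd coeff R (2*q)"
    then have "p dvd coeff R (2*q) - (coeff R (2*q) - coeff (R_nn m) 0)" using F3 by (rule dvd_diff)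
    then show False using Dm0 by simp
  qed
  have R0': "coeff R 0 = p^2 * (en * E^2)" unfolding R0 E(1) by (simp add: power2_eq_square algebra_simps)
  have p0: "p \<noteq> 0" using pp by auto
  have F6: "\<not> p^3 dvd coeff R 0"
  proof
    assume "p^3 dvd coeff R 0"
    then have "p^2 * p dvd p^2 * (en * E^2)" unfolding R0' by (simp add: power3_eq_cube power2_eq_square algebra_simps)
    then have "p dvd en * E^2" using p0 by simp
    then show False using pp en E(2) by (simp add: prime_dvd_mult_iff prime_dvd_power_iff)
  qed
  have R0d: "coeff R 0 div p^2 = en * E^2" unfolding R0' using p0 by simp
  have F7: "\<forall>z. \<not> p dvd (z^2 + (coeff R 0 div p^2) * coeff R (2*q))"
  proof (intro allI notI)
    fix z assume h: "p dvd (z^2 + (coeff R 0 div p^2) * coeff R (2*q))"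
    define y where "y = int s * E * D m"
    have eq0: "z^2 + y^2 = (z^2 + (coeff R 0 div p^2) * coeff R (2*q))
        - (en * E^2) * (coeff R (2*q) - coeff (R_nn m) 0) - (E^2 * (D m)^2) * (en * em - int s ^ 2)"
      unfolding R0d Rm0 y_def by (simp add: power2_eq_square algebra_simps)
    have d: "p dvd z^2 + y^2" unfolding eq0 by (intro dvd_diff dvd_mult h F3 ee)
    have "\<not> p dvd y"
    proof
      assume "p dvd y"
      then have h1: "p dvd y^2 * (en * em)" by (simp add: power2_eq_square)
      have eq: "(E^2 * (D m)^2) * (en * em) * (en * em) = y^2 * (en * em) + (E^2 * (D m)^2) * (en * em) * (en * em - int s ^ 2)"
        unfolding y_def by (simp add: power2_eq_square algebra_simps)
      have "p dvd y^2 * (en * em) + (E^2 * (D m)^2) * (en * em) * (en * em - int s ^ 2)"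
        by (rule dvd_add[OF h1 dvd_mult[OF ee]])
      then have "p dvd (E^2 * (D m)^2) * (en * em) * (en * em)" unfolding eq .
      then show False using pp E(2) Dm en em by (simp add: prime_dvd_mult_iff prime_dvd_power_iff)
    qed
    then show False using no_sqrt_minus_one[OF assms(3,6)] d unfolding p_def by blast
  qed
  have pdvd_P: "p dvd coeff P 0"
  proof (rule ccontr)
    assume "\<not> p dvd coeff P 0"
    then have "coeff Q (2*q) \<noteq> 0" by (rule side[OF pp _ F2[unfolded R_def PQ] F5[unfolded R_def PQ]])
    then have "2 * q \<le> degree Q" by (rule le_degree)
    moreover have "P \<noteq> 0" "Q \<noteq> 0" using F5 PQ unfolding R_def by auto
    then have "degree R = degree P + degree Q" unfolding R_def PQ by (rule degree_mult_eq)
    moreover have "degree R \<le> 2 * n" unfolding R_def by (rule degree_R)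
    ultimately show False using dP assms(5) by linarith
  qed
  have pdvd_Q: "p dvd coeff Q 0"
  proof (rule ccontr)
    assume "\<not> p dvd coeff Q 0"
    then have "coeff P (2*q) \<noteq> 0"
      by (rule side[OF pp _ F2[unfolded R_def PQ mult.commute[of P Q]] F5[unfolded R_def PQ mult.commute[of P Q]]])
    then have "2 * q \<le> degree P" by (rule le_degree)
    then show False using dP assms(5) by linarith
  qed
  show False
    by (rule factor_core[OF pp _ F1[unfolded R_def PQ] F2[unfolded R_def PQ] F4[unfolded R_def PQ]
        F5[unfolded R_def PQ] F6[unfolded R_def PQ] F7[unfolded R_def PQ] pdvd_P pdvd_Q])
      (use q3 in simp)
qed

end
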